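(* Let $\alpha>0$ be non-integer, $n=\lfloor\alpha\rfloor+1$, and $a,b\in\mathbb{R}$ with $a<b$ and $b\equiv a\pmod 1$. If $f$ is defined on ${}_{b}\mathbb{N}$ and $g$ is defined on $\mathbb{N}_a$, then $$\sum_{s=a+1}^{b-1}f(s)\,(\Delta_{a+1}^{\alpha}g)(s-\alpha)=\sum_{s=a+1}^{b-1}g(s)\,({}_{b-1}\Delta^{\alpha}f)(s+\alpha).$$
   Context: Notation: $\mathbb{N}_a=\{a,a+1,\dots\}$, ${}_{b}\mathbb{N}=\{b,b-1,\dots\}$, $\sigma(t)=t+1$, $\Delta h(t)=h(t+1)-h(t)$, $\nabla h(t)=h(t)-h(t-1)$. Falling factorial $t^{(\beta)}=\Gamma(t+1)/\Gamma(t+1-\beta)$ (division at a pole gives $0$). Delta left fractional sum: $\Delta_c^{-\gamma}h(t)=\frac{1}{\Gamma(\gamma)}\sum_{s=c}^{t-\gamma}(t-\sigma(s))^{(\gamma-1)}h(s)$; delta left fractional difference: $\Delta_c^{\alpha}h(t)=\Delta^n\Delta_c^{-(n-\alpha)}h(t)$. Delta right fractional sum: ${}_{c}\Delta^{-\gamma}h(t)=\frac{1}{\Gamma(\gamma)}\sum_{s=t+\gamma}^{c}(s-\sigma(t))^{(\gamma-1)}h(s)$; delta right fractional difference: ${}_{c}\Delta^{\alpha}h(t)=(-1)^n\nabla^n\,{}_{c}\Delta^{-(n-\alpha)}h(t)$. Sums with upper limit smaller than lower limit are $0$ (in particular fractional sums evaluated at points beyond their starting/ending point are $0$). *)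

theory Defs
  imports "HOL-Analysis.Analysis"
begin

(* Sum over the lattice lo, lo+1, ..., hi (hi - lo an integer); empty (= 0) if hi < lo. *)
definition dsum :: "real \<Rightarrow> real \<Rightarrow> (real \<Rightarrow> real) \<Rightarrow> real" where
  "dsum lo hi h = (\<Sum>k\<in>{0..<nat (\<lfloor>hi - lo\<rfloor> + 1)}. h (lo + real k))"

(* falling factorial t^(beta) = Gamma(t+1)/Gamma(t+1-beta); Gamma at a pole is 0 and x/0 = 0 *)
definition ffact :: "real \<Rightarrow> real \<Rightarrow> real" where
  "ffact t \<beta> = Gamma (t + 1) / Gamma (t + 1 - \<beta>)"

definition fdiff :: "(real \<Rightarrow> real) \<Rightarrow> real \<Rightarrow> real" where
  "fdiff h t = h (t + 1) - h t"

definition bdiff :: "(real \<Rightarrow> real) \<Rightarrow> real \<Rightarrow> real" where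
  "bdiff h t = h t - h (t - 1)"

definition lfsum :: "real \<Rightarrow> real \<Rightarrow> (real \<Rightarrow> real) \<Rightarrow> real \<Rightarrow> real" where
  "lfsum c \<gamma> h t = (1 / Gamma \<gamma>) * dsum c (t - \<gamma>) (\<lambda>s. ffact (t - (s + 1)) (\<gamma> - 1) * h s)"

definition lfdiff :: "real \<Rightarrow> real \<Rightarrow> nat \<Rightarrow> (real \<Rightarrow> real) \<Rightarrow> real \<Rightarrow> real" where
  "lfdiff c \<alpha> n h = (fdiff ^^ n) (lfsum c (real n - \<alpha>) h)"

definition rfsum :: "real \<Rightarrow> real \<Rightarrow> (real \<Rightarrow> real) \<Rightarrow> real \<Rightarrow> real" where
  "rfsum c \<gamma> h t = (1 / Gamma \<gamma>) * dsum (t + \<gamma>) c (\<lambda>s. ffact (s - (t + 1)) (\<gamma> - 1) * h s)"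

definition rfdiff :: "real \<Rightarrow> real \<Rightarrow> nat \<Rightarrow> (real \<Rightarrow> real) \<Rightarrow> real \<Rightarrow> real" where
  "rfdiff c \<alpha> n h t = (-1) ^ n * (bdiff ^^ n) (rfsum c (real n - \<alpha>) h) t"

end

theory Submission
  imports Defs
begin

lemma fdiff_lin: "(fdiff^^n) (\<lambda>t. \<Sum>q\<in>Q. w q t * c q) = (\<lambda>t. \<Sum>q\<in>Q. (fdiff^^n) (w q) t * c q)"
  by (induction n) (auto simp: fdiff_def sum_subtractf left_diff_distrib)

lemma bdiff_lin: "(bdiff^^n) (\<lambda>t. \<Sum>q\<in>Q. w q t * c q) = (\<lambda>t. \<Sum>q\<in>Q. (bdiff^^n) (w q) t * c q)"
  by (induction n) (auto simp: bdiff_def sum_subtractf left_diff_distrib)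

lemma fdiff_local: "(\<forall>j\<le>n. h (t + real j) = h' (t + real j)) \<Longrightarrow> (fdiff^^n) h t = (fdiff^^n) h' t"
proof (induction n arbitrary: t)
  case 0 then show ?case by simp
next
  case (Suc n)
  have a: "(fdiff^^n) h t = (fdiff^^n) h' t" using Suc by auto
  have b: "(fdiff^^n) h (t+1) = (fdiff^^n) h' (t+1)"
  proof (rule Suc.IH, intro allI impI)
    fix j assume "j \<le> n"
    then show "h (t + 1 + real j) = h' (t + 1 + real j)" using Suc.prems[rule_format, of "Suc j"]
      by (simp add: algebra_simps)
  qed
  have c: "\<And>k. (fdiff^^Suc n) k t = (fdiff^^n) k (t+1) - (fdiff^^n) k t" by (simp add: fdiff_def)
  show ?case by (simp only: c a b)
qed

lemma bdiff_local: "(\<forall>j\<le>n. h (t - real j) = h' (t - real j)) \<Longrightarrow> (bdiff^^n) h t = (bdiff^^n) h' t"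
proof (induction n arbitrary: t)
  case 0 then show ?case by simp
next
  case (Suc n)
  have a: "(bdiff^^n) h t = (bdiff^^n) h' t" using Suc by auto
  have b: "(bdiff^^n) h (t-1) = (bdiff^^n) h' (t-1)"
  proof (rule Suc.IH, intro allI impI)
    fix j assume "j \<le> n"
    then show "h (t - 1 - real j) = h' (t - 1 - real j)" using Suc.prems[rule_format, of "Suc j"]
      by (simp add: algebra_simps)
  qed
  have c: "\<And>k. (bdiff^^Suc n) k t = (bdiff^^n) k t - (bdiff^^n) k (t-1)" by (simp add: bdiff_def)
  show ?case by (simp only: c a b)
qed

lemma fdiff_shift: "(fdiff^^n) (\<lambda>t. h (t - y)) = (\<lambda>t. (fdiff^^n) h (t - y))"
  by (induction n) (auto simp: fdiff_def algebra_simps)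

lemma bdiff_refl: "(bdiff^^n) (\<lambda>u. h (s - u)) = (\<lambda>u. (-1)^n * (fdiff^^n) h (s - u))"
  by (induction n) (auto simp: fdiff_def bdiff_def algebra_simps)


definition Phi :: "real \<Rightarrow> real \<Rightarrow> real" where
  "Phi \<nu> x = (if \<nu> \<le> x then (1 / Gamma \<nu>) * ffact (x - 1) (\<nu> - 1) else 0)"

lemma lfsum_local:
  fixes a \<alpha> :: real and n i j M :: nat
  assumes "i < M" "j \<le> n"
  shows "lfsum (a+1) (real n - \<alpha>) g (a + 1 + real i - \<alpha> + real j)
     = (\<Sum>k\<in>{0..<M}. Phi (real n - \<alpha>) (a + 1 + real i - \<alpha> + real j - (a + 1 + real k)) * g (a + 1 + real k))"
proof -
  define t where "t = a + 1 + real i - \<alpha> + real j"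
  define \<nu> where "\<nu> = real n - \<alpha>"
  have "t - \<nu> - (a+1) = of_int (int i + int j - int n)" unfolding t_def \<nu>_def by simp
  then have fl: "\<lfloor>t - \<nu> - (a+1)\<rfloor> = int i + int j - int n" by (metis floor_of_int)
  define N where "N = nat (int i + int j - int n + 1)"
  have NM: "N \<le> M" unfolding N_def using assms by linarith
  have cond: "\<nu> \<le> t - (a+1+real k) \<longleftrightarrow> k < N" for k
  proof -
    have "t - (a+1+real k) - \<nu> = of_int (int i + int j - int n - int k)" unfolding t_def \<nu>_def by simp
    then have "\<nu> \<le> t - (a+1+real k) \<longleftrightarrow> 0 \<le> int i + int j - int n - int k"
      by (smt (verit) of_int_0_le_iff)
    then show ?thesis unfolding N_def by linarith
  qed
  have "lfsum (a+1) \<nu> g t = (\<Sum>k\<in>{0..<N}. (1/Gamma \<nu>) * (ffact (t - (a+1+real k + 1)) (\<nu>-1) * g (a+1+real k)))"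
    unfolding lfsum_def dsum_def fl N_def by (simp add: sum_distrib_left)
  also have "\<dots> = (\<Sum>k\<in>{0..<M}. Phi \<nu> (t - (a + 1 + real k)) * g (a + 1 + real k))"
  proof (rule sum.mono_neutral_cong_left)
    show "\<forall>k\<in>{0..<M} - {0..<N}. Phi \<nu> (t - (a + 1 + real k)) * g (a + 1 + real k) = 0"
      using cond unfolding Phi_def by auto
    fix k assume "k \<in> {0..<N}"
    then have "\<nu> \<le> t - (a+1+real k)" using cond by auto
    then show "(1/Gamma \<nu>) * (ffact (t - (a+1+real k + 1)) (\<nu>-1) * g (a+1+real k))
       = Phi \<nu> (t - (a + 1 + real k)) * g (a + 1 + real k)"
      unfolding Phi_def by (simp add: algebra_simps)
  qed (use NM in auto)
  finally show ?thesis unfolding t_def \<nu>_def .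
qed

lemma rfsum_local:
  fixes a b \<alpha> :: real and n p j M :: nat
  assumes "p < M" "j \<le> n" "b = a + 1 + real M"
  shows "rfsum (b-1) (real n - \<alpha>) f (a + 1 + real p + \<alpha> - real j)
     = (\<Sum>q\<in>{0..<M}. Phi (real n - \<alpha>) (a + 1 + real q - (a + 1 + real p + \<alpha> - real j)) * f (a + 1 + real q))"
proof -
  define u where "u = a + 1 + real p + \<alpha> - real j"
  define \<nu> where "\<nu> = real n - \<alpha>"
  define r where "r = p + n - j"
  have rr: "real r = real p + real n - real j" unfolding r_def using assms by (simp add: of_nat_diff)
  have "b - 1 - (u + \<nu>) = of_int (int M - 1 - int r)" unfolding u_def \<nu>_def assms(3) using rr by simp
  then have "\<lfloor>b - 1 - (u + \<nu>)\<rfloor> = int M - 1 - int r" by (metis floor_of_int)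
  then have fl: "nat (\<lfloor>b - 1 - (u + \<nu>)\<rfloor> + 1) = M - r" by simp
  define T where "T q = (1/Gamma \<nu>) * (ffact (a + 1 + real q - u - 1) (\<nu>-1) * f (a + 1 + real q))" for q
  have cond: "\<nu> \<le> a + 1 + real q - u \<longleftrightarrow> r \<le> q" for q
  proof -
    have "a + 1 + real q - u - \<nu> = real q - real r" unfolding u_def \<nu>_def using rr by simp
    then have "\<nu> \<le> a + 1 + real q - u \<longleftrightarrow> real r \<le> real q" by linarith
    then show ?thesis by simp
  qed
  have "rfsum (b-1) \<nu> f u = (\<Sum>k\<in>{0..<M-r}. T (r + k))"
    unfolding rfsum_def dsum_def fl sum_distrib_left
  proof (rule sum.cong[OF refl])
    fix k
    have e: "u + \<nu> + real k = a + 1 + real (r + k)" unfolding u_def \<nu>_def using rr by simp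
    show "1 / Gamma \<nu> * (ffact (u + \<nu> + real k - (u + 1)) (\<nu> - 1) * f (u + \<nu> + real k)) = T (r + k)"
      unfolding T_def e[symmetric] by (simp add: algebra_simps)
  qed
  also have "\<dots> = (\<Sum>q\<in>{r..<M}. T q)"
    using sum.atLeastLessThan_shift_0[of T r M] by (simp add: comp_def)
  also have "\<dots> = (\<Sum>q\<in>{0..<M}. Phi \<nu> (a + 1 + real q - u) * f (a + 1 + real q))"
  proof (rule sum.mono_neutral_cong_left)
    show "\<forall>q\<in>{0..<M} - {r..<M}. Phi \<nu> (a + 1 + real q - u) * f (a + 1 + real q) = 0"
      using cond unfolding Phi_def by auto
    fix q assume "q \<in> {r..<M}"
    then have "\<nu> \<le> a + 1 + real q - u" using cond by auto
    then show "T q = Phi \<nu> (a + 1 + real q - u) * f (a + 1 + real q)"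
      unfolding Phi_def T_def by (simp add: algebra_simps)
  qed auto
  finally show ?thesis unfolding u_def \<nu>_def .
qed


theorem proposition4p7:
  fixes \<alpha> a b :: real and n :: nat and f g :: "real \<Rightarrow> real"
  assumes "\<alpha> > 0" and "\<alpha> \<notin> \<int>"
    and "n = nat \<lfloor>\<alpha>\<rfloor> + 1"
    and "a < b" and "b - a \<in> \<int>"
  shows "dsum (a + 1) (b - 1) (\<lambda>s. f s * lfdiff (a + 1) \<alpha> n g (s - \<alpha>))
       = dsum (a + 1) (b - 1) (\<lambda>s. g s * rfdiff (b - 1) \<alpha> n f (s + \<alpha>))"
proof -
  obtain z where z: "b - a = of_int z" using assms(5) Ints_cases by metis
  define M where "M = nat (z - 1)"
  define x where "x k = a + 1 + real k" for k
  define \<nu> where "\<nu> = real n - \<alpha>"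
  define D where "D = (fdiff^^n) (Phi \<nu>)"
  have "b - 1 - (a + 1) = of_int (z - 2)" using z by simp
  then have "\<lfloor>b - 1 - (a + 1)\<rfloor> = z - 2" by (metis floor_of_int)
  then have dsum_eq: "dsum (a+1) (b-1) h = (\<Sum>k\<in>{0..<M}. h (x k))" for h
    unfolding dsum_def M_def x_def by simp
  show ?thesis
  proof (cases "M = 0")
    case True then show ?thesis by (simp add: dsum_eq)
  next
    case False
    then have hb: "b = a + 1 + real M" unfolding M_def using z by simp
    have L: "lfdiff (a+1) \<alpha> n g (x i - \<alpha>) = (\<Sum>k\<in>{0..<M}. D (x i - \<alpha> - x k) * g (x k))"
      if "i < M" for i
    proof -
      have "lfdiff (a+1) \<alpha> n g (x i - \<alpha>)
          = (fdiff^^n) (\<lambda>t. \<Sum>k\<in>{0..<M}. Phi \<nu> (t - x k) * g (x k)) (x i - \<alpha>)"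
        unfolding lfdiff_def \<nu>_def[symmetric]
      proof (rule fdiff_local, intro allI impI)
        fix j assume "j \<le> n"
        then show "lfsum (a + 1) \<nu> g (x i - \<alpha> + real j) = (\<Sum>k\<in>{0..<M}. Phi \<nu> (x i - \<alpha> + real j - x k) * g (x k))"
          using lfsum_local[OF that, of j n a \<alpha> g] unfolding x_def \<nu>_def by simp
      qed
      also have "\<dots> = (\<Sum>k\<in>{0..<M}. (fdiff^^n) (\<lambda>t. Phi \<nu> (t - x k)) (x i - \<alpha>) * g (x k))"
        by (simp only: fdiff_lin)
      also have "\<dots> = (\<Sum>k\<in>{0..<M}. D (x i - \<alpha> - x k) * g (x k))"
        by (simp only: fdiff_shift D_def)
      finally show ?thesis .
    qed
    have R: "rfdiff (b-1) \<alpha> n f (x p + \<alpha>) = (\<Sum>q\<in>{0..<M}. D (x q - (x p + \<alpha>)) * f (x q))"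
      if "p < M" for p
    proof -
      have "(bdiff^^n) (rfsum (b-1) \<nu> f) (x p + \<alpha>)
          = (bdiff^^n) (\<lambda>u. \<Sum>q\<in>{0..<M}. Phi \<nu> (x q - u) * f (x q)) (x p + \<alpha>)"
      proof (rule bdiff_local, intro allI impI)
        fix j assume "j \<le> n"
        then show "rfsum (b-1) \<nu> f (x p + \<alpha> - real j) = (\<Sum>q\<in>{0..<M}. Phi \<nu> (x q - (x p + \<alpha> - real j)) * f (x q))"
          using rfsum_local[OF that _ hb, of j n \<alpha> f] unfolding x_def \<nu>_def by (simp add: algebra_simps)
      qed
      also have "\<dots> = (\<Sum>q\<in>{0..<M}. (bdiff^^n) (\<lambda>u. Phi \<nu> (x q - u)) (x p + \<alpha>) * f (x q))"
        by (simp only: bdiff_lin)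
      also have "\<dots> = (\<Sum>q\<in>{0..<M}. (-1)^n * D (x q - (x p + \<alpha>)) * f (x q))"
        by (simp only: bdiff_refl D_def)
      finally have "(bdiff^^n) (rfsum (b-1) \<nu> f) (x p + \<alpha>) = (\<Sum>q\<in>{0..<M}. (-1)^n * D (x q - (x p + \<alpha>)) * f (x q))" .
      then show ?thesis unfolding rfdiff_def \<nu>_def[symmetric]
        by (simp add: sum_distrib_left mult.assoc[symmetric] power_mult_distrib[symmetric])
    qed
    have "dsum (a + 1) (b - 1) (\<lambda>s. f s * lfdiff (a + 1) \<alpha> n g (s - \<alpha>))
        = (\<Sum>i\<in>{0..<M}. \<Sum>k\<in>{0..<M}. f (x i) * D (x i - \<alpha> - x k) * g (x k))"
      unfolding dsum_eq by (auto simp: L sum_distrib_left mult.assoc intro!: sum.cong)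
    also have "\<dots> = (\<Sum>k\<in>{0..<M}. \<Sum>i\<in>{0..<M}. f (x i) * D (x i - \<alpha> - x k) * g (x k))"
      by (rule sum.swap)
    also have "\<dots> = dsum (a + 1) (b - 1) (\<lambda>s. g s * rfdiff (b - 1) \<alpha> n f (s + \<alpha>))"
      unfolding dsum_eq
    proof (rule sum.cong[OF refl])
      fix k assume "k \<in> {0..<M}"
      then show "(\<Sum>i\<in>{0..<M}. f (x i) * D (x i - \<alpha> - x k) * g (x k)) = g (x k) * rfdiff (b - 1) \<alpha> n f (x k + \<alpha>)"
        using R[of k] by (simp add: sum_distrib_left algebra_simps)
    qed
    finally show ?thesis .
  qed
qed

end
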